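(* Let $A$ be a finite subset of $\mathbb{R}^n$. The following are equivalent: (i) $A$ is a spectral set; (ii) there exists a continuous function $c:\mathbb{R}^n\to\mathbb{C}$ such that $c(a'-a)=\delta_{aa'}$ for all $a,a'\in A$ (Kronecker delta), $c(-t)=\overline{c(t)}$ for all $t\in\mathbb{R}^n$, and $c(u_1-u_2)=\sum_{a\in A}c(u_1+a)\overline{c(u_2+a)}$ for all $u_1,u_2\in\mathbb{R}^n$.
   Context: For $\lambda,x\in\mathbb{R}^n$ let $e_\lambda(x)=e^{2\pi i\lambda\cdot x}$. For a finite set $A\subset\mathbb{R}^n$ with $N=\#A$, let $\delta_A=\frac1N\sum_{a\in A}\delta_a$. $A$ is called spectral if there is $\Lambda\subset\mathbb{R}^n$ such that $\{e_\lambda|_A\}_{\lambda\in\Lambda}$ is an orthogonal basis of $L^2(\delta_A)$. *)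

theory Defs
  imports "HOL-Analysis.Analysis"
begin

definition expo :: "real^'n \<Rightarrow> real^'n \<Rightarrow> complex" where
  "expo lam x = exp (2 * complex_of_real pi * \<i> * complex_of_real (lam \<bullet> x))"

definition L2_inner :: "'a set \<Rightarrow> ('a \<Rightarrow> complex) \<Rightarrow> ('a \<Rightarrow> complex) \<Rightarrow> complex" where
  "L2_inner A f g = (1 / of_nat (card A)) * (\<Sum>a\<in>A. f a * cnj (g a))"

definition orth_basis_exps :: "(real^'n) set \<Rightarrow> (real^'n) set \<Rightarrow> bool" where
  "orth_basis_exps A Lam \<longleftrightarrow>
     (\<forall>l\<in>Lam. \<forall>l'\<in>Lam. l \<noteq> l' \<longrightarrow> L2_inner A (expo l) (expo l') = 0) \<and>
     (\<forall>f :: real^'n \<Rightarrow> complex. \<exists>L0 coef. finite L0 \<and> L0 \<subseteq> Lam \<and>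
        (\<forall>a\<in>A. f a = (\<Sum>l\<in>L0. coef l * expo l a)))"

definition spectral :: "(real^'n) set \<Rightarrow> bool" where
  "spectral A \<longleftrightarrow> (\<exists>Lam. orth_basis_exps A Lam)"

end

theory Submission
  imports Defs "HOL-Library.Function_Algebras" "Jordan_Normal_Form.Spectral_Radius"
begin


lemma expo_add: "expo l (x + y) = expo l x * expo l y"
  unfolding expo_def by (simp add: inner_add_right ring_distribs exp_add)

lemma expo_neg: "expo l (- x) = cnj (expo l x)"
  unfolding expo_def by (simp add: exp_cnj)

lemma expo_cnj_mult: "cnj (expo l x) * expo l x = 1"
proof -
  have "cnj (expo l x) * expo l x = expo l (-x) * expo l x" by (simp add: expo_neg)
  also have "\<dots> = expo l (-x + x)" by (rule expo_add[symmetric])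
  also have "\<dots> = 1" by (simp add: expo_def)
  finally show ?thesis .
qed

lemma expo_mult_cnj: "expo l x * cnj (expo l x) = 1"
  using expo_cnj_mult by (simp add: mult.commute)

lemma expo_diff: "expo l (x - y) = expo l x * cnj (expo l y)"
  using expo_add[of l x "-y"] by (simp add: expo_neg)

lemma expo_nz: "expo l x \<noteq> 0"
  unfolding expo_def by simp

lemma expo_0: "expo l 0 = 1"
  unfolding expo_def by simp

lemma expo_cont: "continuous_on UNIV (expo l)"
  unfolding expo_def by (intro continuous_intros)

lemma sum_if_eq: "finite S \<Longrightarrow> (\<Sum>x\<in>S. (if x = y then 1 else 0) * (f x::complex)) = (if y \<in> S then f y else 0)"
proof -
  assume S: "finite S"
  have "(\<Sum>x\<in>S. (if x = y then 1 else 0) * f x) = (\<Sum>x\<in>S. if x = y then f x else 0)"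
    by (rule sum.cong) auto
  then show ?thesis using sum.delta[OF S, of y f] by simp
qed

lemma dir1:
  fixes A :: "(real^'n) set"
  assumes fin: "finite A" and ne: "A \<noteq> {}" and ob: "orth_basis_exps A Lam"
  shows "\<exists>c :: real^'n \<Rightarrow> complex. continuous_on UNIV c \<and>
       (\<forall>a\<in>A. \<forall>a'\<in>A. c (a' - a) = (if a = a' then 1 else 0)) \<and>
       (\<forall>t. c (- t) = cnj (c t)) \<and>
       (\<forall>u1 u2. c (u1 - u2) = (\<Sum>a\<in>A. c (u1 + a) * cnj (c (u2 + a))))"
proof -
  define N where "N = card A"
  have Npos: "N > 0" using fin ne unfolding N_def by (simp add: card_gt_0_iff)
  have NC: "(of_nat N :: complex) \<noteq> 0" using Npos by simp
  have orth: "(\<Sum>a\<in>A. expo l a * cnj (expo l' a)) = 0" if "l \<in> Lam" "l' \<in> Lam" "l \<noteq> l'" for l l'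
    using ob that NC unfolding orth_basis_exps_def L2_inner_def N_def by auto
  have self: "(\<Sum>a\<in>A. expo l a * cnj (expo l a)) = of_nat N" for l
    by (simp add: expo_mult_cnj N_def)
  have G: "(\<Sum>a\<in>A. expo l a * cnj (expo l' a)) = (if l = l' then of_nat N else 0)"
    if "l \<in> Lam" "l' \<in> Lam" for l l'
    using orth[OF that] self by auto
  have K: "finite Lam \<and> (\<forall>a\<in>A. (if a = a0 then 1 else 0) = (\<Sum>l\<in>Lam. (cnj (expo l a0) / of_nat N) * expo l a))"
    if a0: "a0 \<in> A" for a0
  proof -
    obtain L0 coef where L0: "finite L0" "L0 \<subseteq> Lam"
      and rep: "\<forall>a\<in>A. (if a = a0 then 1 else 0) = (\<Sum>l\<in>L0. coef l * expo l a)"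
      using ob[unfolded orth_basis_exps_def, THEN conjunct2, THEN spec[of _ "\<lambda>a. if a = a0 then 1 else 0"]]
      by blast
    have key: "cnj (expo m a0) = (if m \<in> L0 then coef m * of_nat N else 0)" if m: "m \<in> Lam" for m
    proof -
      have "cnj (expo m a0) = (\<Sum>a\<in>A. (if a = a0 then 1 else 0) * cnj (expo m a))"
        using sum_if_eq[OF fin] a0 by simp
      also have "\<dots> = (\<Sum>a\<in>A. (\<Sum>l\<in>L0. coef l * expo l a) * cnj (expo m a))"
        by (rule sum.cong) (use rep in auto)
      also have "\<dots> = (\<Sum>l\<in>L0. coef l * (\<Sum>a\<in>A. expo l a * cnj (expo m a)))"
        by (simp add: sum_distrib_left sum_distrib_right mult.assoc sum.swap[of _ A])
      also have "\<dots> = (\<Sum>l\<in>L0. coef l * (if l = m then of_nat N else 0))"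
        by (rule sum.cong) (use G L0 m in auto)
      also have "\<dots> = (if m \<in> L0 then coef m * of_nat N else 0)"
        using L0(1) by (simp add: if_distrib sum.delta' cong: if_cong)
      finally show ?thesis .
    qed
    have sub: "Lam \<subseteq> L0"
    proof
      fix m assume m: "m \<in> Lam"
      show "m \<in> L0"
      proof (rule ccontr)
        assume "m \<notin> L0"
        then have "cnj (expo m a0) = 0" using key[OF m] by simp
        then show False using expo_nz[of m a0] by simp
      qed
    qed
    have eqL: "Lam = L0" using sub L0 by auto
    have coefm: "coef m = cnj (expo m a0) / of_nat N" if "m \<in> Lam" for m
      using key[OF that] eqL that NC by simp
    show ?thesis
    proof
      show "finite Lam" using eqL L0 by simp
      show "\<forall>a\<in>A. (if a = a0 then 1 else 0) = (\<Sum>l\<in>Lam. (cnj (expo l a0) / of_nat N) * expo l a)"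
        using rep coefm eqL by simp
    qed
  qed
  obtain a00 where a00: "a00 \<in> A" using ne by auto
  have finL: "finite Lam" using K[OF a00] by simp
  define c where "c t = (1 / of_nat N) * (\<Sum>l\<in>Lam. expo l t)" for t
  show ?thesis
  proof (intro exI[of _ c] conjI allI ballI)
    show "continuous_on UNIV c" unfolding c_def
      by (intro continuous_intros continuous_on_sum expo_cont)
  next
    fix a a' assume a: "a \<in> A" and a': "a' \<in> A"
    have "c (a' - a) = (\<Sum>l\<in>Lam. (cnj (expo l a) / of_nat N) * expo l a')"
      unfolding c_def by (simp add: expo_diff sum_distrib_left sum_divide_distrib mult.commute)
    also have "\<dots> = (if a' = a then 1 else 0)" using K[OF a] a' by simp
    finally show "c (a' - a) = (if a = a' then 1 else 0)" by auto
  next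
    fix t
    show "c (- t) = cnj (c t)" unfolding c_def by (simp add: expo_neg)
  next
    fix u1 u2
    have "(\<Sum>a\<in>A. c (u1 + a) * cnj (c (u2 + a)))
        = (\<Sum>a\<in>A. (1 / of_nat N) * (1 / of_nat N) * (\<Sum>l\<in>Lam. \<Sum>l'\<in>Lam.
              (expo l u1 * cnj (expo l' u2)) * (expo l a * cnj (expo l' a))))"
    proof (rule sum.cong[OF refl])
      fix a assume "a \<in> A"
      have "c (u1 + a) * cnj (c (u2 + a)) = (1 / of_nat N) * (1 / of_nat N) *
          ((\<Sum>l\<in>Lam. expo l (u1 + a)) * (\<Sum>l'\<in>Lam. cnj (expo l' (u2 + a))))"
        unfolding c_def by simp
      also have "\<dots> = (1 / of_nat N) * (1 / of_nat N) * (\<Sum>l\<in>Lam. \<Sum>l'\<in>Lam.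
          expo l (u1 + a) * cnj (expo l' (u2 + a)))"
        by (simp add: sum_product)
      also have "\<dots> = (1 / of_nat N) * (1 / of_nat N) * (\<Sum>l\<in>Lam. \<Sum>l'\<in>Lam.
              (expo l u1 * cnj (expo l' u2)) * (expo l a * cnj (expo l' a)))"
        by (simp add: expo_add mult_ac)
      finally show "c (u1 + a) * cnj (c (u2 + a)) = (1 / of_nat N) * (1 / of_nat N) * (\<Sum>l\<in>Lam. \<Sum>l'\<in>Lam.
              (expo l u1 * cnj (expo l' u2)) * (expo l a * cnj (expo l' a)))" .
    qed
    also have "\<dots> = (1 / of_nat N) * (1 / of_nat N) * (\<Sum>l\<in>Lam. \<Sum>l'\<in>Lam.
              (expo l u1 * cnj (expo l' u2)) * (\<Sum>a\<in>A. expo l a * cnj (expo l' a)))"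
      by (simp add: sum_distrib_left sum.swap[of _ A])
    also have "\<dots> = (1 / of_nat N) * (1 / of_nat N) * (\<Sum>l\<in>Lam. \<Sum>l'\<in>Lam.
              (expo l u1 * cnj (expo l' u2)) * (if l = l' then of_nat N else 0))"
      by (intro arg_cong[where f="\<lambda>x. _ * x"] sum.cong refl) (simp add: G)
    also have "\<dots> = (1 / of_nat N) * (1 / of_nat N) * (\<Sum>l\<in>Lam. (expo l u1 * cnj (expo l u2)) * of_nat N)"
      using finL by (simp add: if_distrib sum.delta cong: if_cong)
    also have "\<dots> = c (u1 - u2)"
      unfolding c_def using NC by (simp add: expo_diff sum_distrib_right[symmetric])
    finally show "c (u1 - u2) = (\<Sum>a\<in>A. c (u1 + a) * cnj (c (u2 + a)))" by simp
  qed
qed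



lemma additive_cont_linear:
  fixes phi :: "real \<Rightarrow> complex"
  assumes add: "\<And>r s. phi (r + s) = phi r + phi s" and cont: "continuous_on UNIV phi"
  shows "phi r = of_real r * phi 1"
proof -
  have z: "phi 0 = 0" using add[of 0 0] by simp
  have nat: "phi (of_nat n * r) = of_nat n * phi r" for n r
    by (induction n) (simp_all add: z add distrib_right add.commute)
  have neg: "phi (- r) = - phi r" for r
    using add[of r "-r"] z by (simp add: eq_neg_iff_add_eq_0 add.commute)
  have int: "phi (of_int i * r) = of_int i * phi r" for i r
  proof (cases "i \<ge> 0")
    case True
    define n where "n = nat i"
    have "i = int n" using True unfolding n_def by simp
    then show ?thesis using nat by simp
  next
    case False
    define n where "n = nat (- i)"
    have "i = - int n" using False unfolding n_def by simp
    then show ?thesis using nat[of n r] neg[of "of_nat n * r"] by simp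
  qed
  define psi where "psi r = phi r - of_real r * phi 1" for r
  have cpsi: "continuous_on UNIV psi" unfolding psi_def by (intro continuous_intros cont)
  have rat: "psi q = 0" if "q \<in> \<rat>" for q
  proof -
    from that obtain i n where q: "q = real_of_int i / real n" and n: "n \<noteq> 0"
      unfolding Rats_eq_int_div_nat by auto
    have "of_nat n * phi q = phi (of_nat n * q)" using nat by simp
    also have "of_nat n * q = of_int i * 1" using n q by simp
    also have "phi (of_int i * 1) = of_int i * phi 1" using int by blast
    finally have "of_nat n * phi q = of_int i * phi 1" .
    then have "phi q = (of_int i / of_nat n) * phi 1" using n by (simp add: field_simps)
    also have "(of_int i / of_nat n :: complex) = of_real q" using q by simp
    finally show ?thesis unfolding psi_def by simp
  qed
  have cl: "closed {x \<in> UNIV. psi x = 0}"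
    by (rule continuous_closed_preimage_constant[OF cpsi closed_UNIV])
  have "closure \<rat> \<subseteq> {x \<in> UNIV. psi x = 0}"
    by (rule closure_minimal[OF _ cl]) (use rat in auto)
  then have "psi r = 0" using Rats_closure_real by auto
  then show ?thesis unfolding psi_def by simp
qed

lemma char_expo:
  fixes chi :: "real^'n \<Rightarrow> complex"
  assumes cont: "continuous_on UNIV chi" and mult: "\<And>s t. chi (s + t) = chi s * chi t"
    and ch0: "chi 0 = 1" and bd: "\<And>s. norm (chi s) \<le> B"
  shows "\<exists>l. \<forall>s. chi s = expo l s"
proof -
  have inv: "chi s * chi (- s) = 1" for s using mult[of s "-s"] ch0 by simp
  have pow: "chi (of_nat k *\<^sub>R s) = chi s ^ k" for k s
    by (induction k) (simp_all add: ch0 mult scaleR_add_left algebra_simps)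
  have le1: "norm (chi s) \<le> 1" for s
  proof (rule ccontr)
    assume "\<not> norm (chi s) \<le> 1"
    then have "1 < norm (chi s)" by simp
    then obtain k where "B < norm (chi s) ^ k" using real_arch_pow by blast
    then have "B < norm (chi (of_nat k *\<^sub>R s))" by (simp add: pow norm_power)
    then show False using bd by (meson not_le)
  qed
  have n1: "norm (chi s) = 1" for s
  proof -
    have "norm (chi s) * norm (chi (-s)) = 1" using inv[of s] by (metis norm_mult norm_one)
    moreover have "norm (chi s) * norm (chi (-s)) \<le> norm (chi s) * 1"
      using le1[of "-s"] by (intro mult_left_mono) auto
    ultimately show ?thesis using le1[of s] by linarith
  qed
  have nz: "chi z \<noteq> 0" for z using n1[of z] by auto
  obtain L where contL: "continuous_on UNIV L" and L0: "\<And>x. x \<in> UNIV \<Longrightarrow> chi x = exp (L x)"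
    by (rule continuous_logarithm_on_contractible[OF cont contractible_UNIV]) (use nz in auto)
  have L: "chi x = exp (L x)" for x using L0 by simp
  have reL: "Re (L x) = 0" for x
    using n1[of x] L[of x] by simp
  have Ladd: "L (x + y) = L x + L y - L 0" for x y
  proof -
    define h where "h x = L (x + y) - L x - L y" for x
    have ch: "continuous_on UNIV h" unfolding h_def
      by (intro continuous_intros continuous_on_compose2[OF contL]) auto
    have eh: "exp (h x) = 1" for x
    proof -
      have "exp (h x) * (chi x * chi y) = exp (h x + L x + L y)"
        unfolding L by (simp add: exp_add)
      also have "h x + L x + L y = L (x + y)" unfolding h_def by simp
      finally have "exp (h x) * (chi x * chi y) = chi (x + y)" using L by simp
      then show ?thesis using mult[of x y] nz[of x] nz[of y] by simp
    qed
    have hint: "\<exists>n::int. h x = of_int (2 * n) * pi * \<i>" for x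
    proof -
      from eh[of x] obtain n :: int where "Re (h x) = 0" "Im (h x) = of_int (2 * n) * pi"
        unfolding exp_eq_1 by blast
      then have "h x = of_int (2 * n) * pi * \<i>" by (simp add: complex_eq_iff)
      then show ?thesis by blast
    qed
    have "h constant_on UNIV"
    proof (rule continuous_discrete_range_constant[OF connected_UNIV ch])
      fix x :: "real^'n" assume "x \<in> UNIV"
      show "\<exists>e>0. \<forall>y. y \<in> UNIV \<and> h y \<noteq> h x \<longrightarrow> e \<le> norm (h y - h x)"
      proof (intro exI[of _ "2 * pi"] conjI allI impI)
        show "0 < 2 * pi" by simp
        fix z assume "z \<in> UNIV \<and> h z \<noteq> h x"
        then have ne: "h z \<noteq> h x" by simp
        obtain n where n: "h x = of_int (2 * n) * pi * \<i>" using hint by blast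
        obtain m where m: "h z = of_int (2 * m) * pi * \<i>" using hint by blast
        have mn: "m \<noteq> n" using ne m n by auto
        have "norm (h z - h x) = norm (of_real (2 * pi * of_int (m - n)) * \<i>)"
          using m n by (simp add: algebra_simps)
        also have "\<dots> = \<bar>2 * pi * of_int (m - n)\<bar>" by (simp only: norm_mult norm_ii norm_of_real mult_1_right)
        also have "\<dots> = 2 * pi * \<bar>of_int (m - n)\<bar>" by (simp add: abs_mult)
        also have "\<dots> \<ge> 2 * pi * 1"
          using mn by (intro mult_left_mono) auto
        finally show "2 * pi \<le> norm (h z - h x)" by simp
      qed
    qed
    then have "h x = h 0" unfolding constant_on_def by auto
    then show ?thesis unfolding h_def by (simp add: algebra_simps)
  qed
  define M where "M x = L x - L 0" for x
  have Madd: "M (x + y) = M x + M y" for x y unfolding M_def using Ladd[of x y] by simp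
  have contM: "continuous_on UNIV M" unfolding M_def by (intro continuous_intros contL)
  have Mscale: "M (r *\<^sub>R x) = of_real r * M x" for r x
  proof -
    have "(\<lambda>r. M (r *\<^sub>R x)) r = of_real r * (\<lambda>r. M (r *\<^sub>R x)) 1"
    proof (rule additive_cont_linear)
      show "M ((r + s) *\<^sub>R x) = M (r *\<^sub>R x) + M (s *\<^sub>R x)" for r s
        by (simp add: scaleR_add_left Madd)
      show "continuous_on UNIV (\<lambda>r. M (r *\<^sub>R x))"
        by (intro continuous_on_compose2[OF contM] continuous_intros) auto
    qed
    then show ?thesis by simp
  qed
  have M0: "M 0 = 0" unfolding M_def by simp
  have Msum: "M (sum g S) = (\<Sum>i\<in>S. M (g i))" if "finite S" for g and S :: "'b set"
    using that by (induction S rule: finite_induct) (simp_all add: M0 Madd)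
  have reM: "Re (M x) = 0" for x unfolding M_def using reL by simp
  define l :: "real^'n" where "l = (\<chi> i. Im (M (axis i 1)) / (2 * pi))"
  have Mx: "M x = 2 * of_real pi * \<i> * of_real (l \<bullet> x)" for x
  proof -
    have xe: "x = (\<Sum>i\<in>UNIV. (x $ i) *\<^sub>R axis i 1)"
      using basis_expansion[of x] by (simp add: scalar_mult_eq_scaleR)
    have "M x = M (\<Sum>i\<in>UNIV. (x $ i) *\<^sub>R axis i 1)" using arg_cong[OF xe, of M] .
    also have "\<dots> = (\<Sum>i\<in>UNIV. M ((x $ i) *\<^sub>R axis i 1))" by (rule Msum) simp
    also have "\<dots> = (\<Sum>i\<in>UNIV. of_real (x $ i) * M (axis i 1))" by (simp only: Mscale)
    also have "\<dots> = (\<Sum>i\<in>UNIV. of_real (x $ i) * (\<i> * of_real (Im (M (axis i 1)))))"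
      by (rule sum.cong[OF refl]) (simp add: complex_eq_iff reM)
    also have "\<dots> = (\<Sum>i\<in>UNIV. 2 * of_real pi * \<i> * of_real (l $ i * x $ i))"
      by (rule sum.cong[OF refl]) (simp add: l_def field_simps)
    also have "\<dots> = 2 * of_real pi * \<i> * of_real (l \<bullet> x)"
      unfolding inner_vec_def by (simp add: sum_distrib_left)
    finally show ?thesis .
  qed
  have "chi s = expo l s" for s
  proof -
    have "chi s = exp (M s + L 0)" unfolding M_def L by simp
    also have "\<dots> = exp (M s) * chi 0" by (simp add: exp_add L)
    also have "\<dots> = expo l s" using ch0 unfolding expo_def Mx by simp
    finally show ?thesis .
  qed
  then show ?thesis by blast
qed



definition sc :: "complex \<Rightarrow> ('a \<Rightarrow> complex) \<Rightarrow> 'a \<Rightarrow> complex" where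
  "sc r f = (\<lambda>x. r * f x)"

lemma sc_apply[simp]: "sc r f x = r * f x" by (simp add: sc_def)

interpretation fv: vector_space "sc :: complex \<Rightarrow> ('a \<Rightarrow> complex) \<Rightarrow> 'a \<Rightarrow> complex"
  by unfold_locales (simp_all add: sc_def fun_eq_iff algebra_simps)

lemma sum_fun_apply: "(\<Sum>i\<in>S. f i) x = (\<Sum>i\<in>S. f i x)"
  by (induction S rule: infinite_finite_induct) auto

lemma expo_freq_diff: "expo l s * cnj (expo l' s) = expo (l - l') s"
  unfolding expo_def by (simp add: exp_cnj exp_add[symmetric] inner_diff_left algebra_simps)

lemma expo_half: assumes "l \<noteq> l'" shows "\<exists>s. expo (l - l') s = -1"
proof -
  define d where "d = l - l'"
  have dd: "d \<bullet> d > 0" using assms unfolding d_def by simp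
  define s where "s = (1 / (2 * (d \<bullet> d))) *\<^sub>R d"
  have hs: "d \<bullet> s = 1/2" unfolding s_def using dd by (simp add: inner_scaleR_right)
  have "expo d s = exp (of_real pi * \<i>)" unfolding expo_def hs by simp
  also have "\<dots> = -1" by (rule exp_pi_i)
  finally show ?thesis unfolding d_def by blast
qed

lemma expo_inj: assumes "expo l = expo l'" shows "l = l'"
proof (rule ccontr)
  assume "l \<noteq> l'"
  then obtain s where s: "expo (l - l') s = -1" using expo_half by blast
  have "expo l s * cnj (expo l' s) = expo l s * cnj (expo l s)" using assms by simp
  then have "expo l s * cnj (expo l' s) = 1" using expo_mult_cnj[of l s] by simp
  then show False using s expo_freq_diff[of l s l'] by simp
qed

locale cset =
  fixes A :: "(real^'n) set" and c :: "real^'n \<Rightarrow> complex"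
  assumes fin: "finite A" and ne: "A \<noteq> {}" and cont: "continuous_on UNIV c"
    and delta: "\<forall>a\<in>A. \<forall>a'\<in>A. c (a' - a) = (if a = a' then 1 else 0)"
    and herm: "\<forall>t. c (- t) = cnj (c t)"
    and ident: "\<forall>u1 u2. c (u1 - u2) = (\<Sum>a\<in>A. c (u1 + a) * cnj (c (u2 + a)))"
begin

definition F :: "(real^'n \<Rightarrow> complex) \<Rightarrow> real^'n \<Rightarrow> complex" where
  "F al x = (\<Sum>a\<in>A. al a * c (x + a))"
definition V where "V = range F"
definition Lam where "Lam = {l. \<forall>x. expo l x = (\<Sum>a\<in>A. expo l (-a) * c (x + a))}"
definition ip :: "(real^'n \<Rightarrow> complex) \<Rightarrow> (real^'n \<Rightarrow> complex) \<Rightarrow> complex" where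
  "ip f g = (\<Sum>b\<in>A. f (-b) * cnj (g (-b)))"
definition N where "N = card A"
definition cf where "cf a = (\<lambda>x. c (x + a))"

lemma Npos: "N > 0" using fin ne unfolding N_def by (simp add: card_gt_0_iff)

lemma deltaI: "a \<in> A \<Longrightarrow> a' \<in> A \<Longrightarrow> c (a' - a) = (if a = a' then 1 else 0)"
  using delta by blast

lemma identI: "c (u1 - u2) = (\<Sum>a\<in>A. c (u1 + a) * cnj (c (u2 + a)))"
  using ident by blast

lemma c0: "c 0 = 1"
proof -
  obtain a0 where "a0 \<in> A" using ne by auto
  then show ?thesis using deltaI[of a0 a0] by simp
qed

lemma cbound: "norm (c x) \<le> 1"
proof -
  obtain a0 where a0: "a0 \<in> A" using ne by auto
  have "c 0 = (\<Sum>a\<in>A. c (x - a0 + a) * cnj (c (x - a0 + a)))"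
    using identI[of "x - a0" "x - a0"] by simp
  also have "\<dots> = (\<Sum>a\<in>A. of_real ((norm (c (x - a0 + a)))\<^sup>2))"
    by (rule sum.cong[OF refl]) (rule complex_norm_square[symmetric])
  finally have "(1::complex) = of_real (\<Sum>a\<in>A. (norm (c (x - a0 + a)))\<^sup>2)" by (simp add: c0)
  then have s1: "(\<Sum>a\<in>A. (norm (c (x - a0 + a)))\<^sup>2) = 1" by (metis of_real_eq_1_iff)
  have "(norm (c (x - a0 + a0)))\<^sup>2 \<le> (\<Sum>a\<in>A. (norm (c (x - a0 + a)))\<^sup>2)"
    by (rule member_le_sum) (use a0 fin in auto)
  then have "(norm (c x))\<^sup>2 \<le> 1\<^sup>2" using s1 by simp
  then show ?thesis by (rule power2_le_imp_le) simp
qed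

lemma F_at: "b \<in> A \<Longrightarrow> F al (-b) = al b"
proof -
  assume b: "b \<in> A"
  have "F al (-b) = (\<Sum>a\<in>A. if a = b then al a else 0)"
    unfolding F_def
  proof (rule sum.cong[OF refl])
    fix a assume a: "a \<in> A"
    have "c (- b + a) = c (a - b)" by (simp add: algebra_simps)
    also have "\<dots> = (if b = a then 1 else 0)" using deltaI[OF b a] .
    finally show "al a * c (- b + a) = (if a = b then al a else 0)" by auto
  qed
  also have "\<dots> = al b" using fin b by (simp add: sum.delta')
  finally show ?thesis .
qed

lemma I_lem:
  assumes a: "a \<in> A" and a': "a' \<in> A"
  shows "(\<Sum>b\<in>A. c (s - b + a) * cnj (c (s - b + a'))) = (if a = a' then 1 else 0)"
proof -
  have h: "c (s - b + e) = cnj (c ((- s - e) + b))" for b e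
  proof -
    have eq: "s - b + e = - ((- s - e) + b)" by (simp add: algebra_simps)
    show ?thesis by (subst eq) (rule herm[rule_format])
  qed
  have "(\<Sum>b\<in>A. c (s - b + a) * cnj (c (s - b + a')))
      = (\<Sum>b\<in>A. cnj (c ((- s - a) + b) * cnj (c ((- s - a') + b))))"
    by (rule sum.cong[OF refl]) (simp add: h)
  also have "\<dots> = cnj (\<Sum>b\<in>A. c ((- s - a) + b) * cnj (c ((- s - a') + b)))"
    by (rule cnj_sum[symmetric])
  also have "(\<Sum>b\<in>A. c ((- s - a) + b) * cnj (c ((- s - a') + b))) = c ((- s - a) - (- s - a'))"
    by (rule identI[symmetric])
  also have "(- s - a) - (- s - a') = a' - a" by (simp add: algebra_simps)
  finally show ?thesis using deltaI[OF a a'] by simp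
qed

lemma G: "(\<Sum>b\<in>A. F al (s - b) * cnj (F be (s - b))) = (\<Sum>a\<in>A. al a * cnj (be a))"
proof -
  have "(\<Sum>b\<in>A. F al (s - b) * cnj (F be (s - b)))
      = (\<Sum>b\<in>A. \<Sum>a\<in>A. \<Sum>a'\<in>A. (al a * cnj (be a')) * (c (s - b + a) * cnj (c (s - b + a'))))"
  proof (rule sum.cong[OF refl])
    fix b assume "b \<in> A"
    have "F al (s - b) * cnj (F be (s - b))
        = (\<Sum>a\<in>A. al a * c (s - b + a)) * (\<Sum>a'\<in>A. cnj (be a') * cnj (c (s - b + a')))"
      unfolding F_def by (simp add: cnj_sum)
    also have "\<dots> = (\<Sum>a\<in>A. \<Sum>a'\<in>A. (al a * c (s - b + a)) * (cnj (be a') * cnj (c (s - b + a'))))"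
      by (rule sum_product)
    also have "\<dots> = (\<Sum>a\<in>A. \<Sum>a'\<in>A. (al a * cnj (be a')) * (c (s - b + a) * cnj (c (s - b + a'))))"
      by (simp add: mult_ac)
    finally show "F al (s - b) * cnj (F be (s - b))
        = (\<Sum>a\<in>A. \<Sum>a'\<in>A. (al a * cnj (be a')) * (c (s - b + a) * cnj (c (s - b + a'))))" .
  qed
  also have "\<dots> = (\<Sum>a\<in>A. \<Sum>a'\<in>A. \<Sum>b\<in>A. (al a * cnj (be a')) * (c (s - b + a) * cnj (c (s - b + a'))))"
    by (rule trans[OF sum.swap], rule sum.cong[OF refl], rule sum.swap)
  also have "\<dots> = (\<Sum>a\<in>A. \<Sum>a'\<in>A. (al a * cnj (be a')) * (if a = a' then 1 else 0))"
    by (intro sum.cong refl) (simp add: sum_distrib_left[symmetric] I_lem)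
  also have "\<dots> = (\<Sum>a\<in>A. al a * cnj (be a))"
    using fin by (simp add: if_distrib sum.delta' cong: if_cong)
  finally show ?thesis .
qed

lemma ip_F: "ip (F al) (F be) = (\<Sum>a\<in>A. al a * cnj (be a))"
  unfolding ip_def using G[of al 0 be] by simp

lemma shift_F: "(\<lambda>x. F al (x + t)) = F (\<lambda>a. \<Sum>a'\<in>A. al a' * cnj (c (- t - a' + a)))"
proof
  fix x
  have "F al (x + t) = (\<Sum>a'\<in>A. al a' * (\<Sum>a\<in>A. c (x + a) * cnj (c (- t - a' + a))))"
    unfolding F_def
  proof (rule sum.cong[OF refl])
    fix a' assume "a' \<in> A"
    have "c (x + t + a') = c (x - (- t - a'))" by (simp add: algebra_simps)
    also have "\<dots> = (\<Sum>a\<in>A. c (x + a) * cnj (c (- t - a' + a)))" by (rule identI)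
    finally show "al a' * c (x + t + a') = al a' * (\<Sum>a\<in>A. c (x + a) * cnj (c (- t - a' + a)))" by simp
  qed
  also have "\<dots> = (\<Sum>a\<in>A. (\<Sum>a'\<in>A. al a' * cnj (c (- t - a' + a))) * c (x + a))"
    apply (simp only: sum_distrib_left)
    apply (subst sum.swap)
    apply (simp add: sum_distrib_right sum_distrib_left mult_ac)
    done
  also have "\<dots> = F (\<lambda>a. \<Sum>a'\<in>A. al a' * cnj (c (- t - a' + a))) x"
    unfolding F_def by simp
  finally show "F al (x + t) = F (\<lambda>a. \<Sum>a'\<in>A. al a' * cnj (c (- t - a' + a))) x" .
qed

lemma shift_V: "f \<in> V \<Longrightarrow> (\<lambda>x. f (x + t)) \<in> V"
  unfolding V_def using shift_F by auto

lemma ip_shift: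
  assumes "f \<in> V" "g \<in> V"
  shows "ip (\<lambda>x. f (x + t)) (\<lambda>x. g (x + t)) = ip f g"
proof -
  obtain al be where f: "f = F al" and g: "g = F be" using assms unfolding V_def by auto
  have "ip (\<lambda>x. f (x + t)) (\<lambda>x. g (x + t)) = (\<Sum>b\<in>A. F al (t - b) * cnj (F be (t - b)))"
    unfolding ip_def f g by (simp add: algebra_simps)
  also have "\<dots> = ip f g" unfolding G f g ip_F ..
  finally show ?thesis .
qed

lemma V_subspace: "fv.subspace V"
  unfolding fv.subspace_def
proof (intro conjI ballI allI)
  show "0 \<in> V" unfolding V_def
    by (rule range_eqI[of _ _ "\<lambda>_. 0"]) (simp add: F_def fun_eq_iff)
next
  fix f g assume "f \<in> V" "g \<in> V"
  then obtain al be where "f = F al" "g = F be" unfolding V_def by auto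
  then show "f + g \<in> V" unfolding V_def
    by (intro range_eqI[of _ _ "\<lambda>a. al a + be a"]) (simp add: F_def fun_eq_iff sum.distrib algebra_simps)
next
  fix r f assume "f \<in> V"
  then obtain al where "f = F al" unfolding V_def by auto
  then show "sc r f \<in> V" unfolding V_def
    by (intro range_eqI[of _ _ "\<lambda>a. r * al a"]) (simp add: F_def fun_eq_iff sum_distrib_left mult_ac)
qed

lemma fin_cfA: "finite (cf ` A)" using fin by simp

lemma V_span: "V \<subseteq> fv.span (cf ` A)"
proof
  fix f assume "f \<in> V"
  then obtain al where f: "f = F al" unfolding V_def by auto
  have "f = (\<Sum>a\<in>A. sc (al a) (cf a))"
    unfolding f by (simp add: fun_eq_iff sum_fun_apply F_def cf_def)
  also have "\<dots> \<in> fv.span (cf ` A)"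
  proof (rule fv.span_sum)
    fix a assume "a \<in> A"
    then have "cf a \<in> fv.span (cf ` A)" by (intro fv.span_base) simp
    then show "sc (al a) (cf a) \<in> fv.span (cf ` A)" by (rule fv.span_scale)
  qed
  finally show "f \<in> fv.span (cf ` A)" .
qed

lemma c_shift_cont: "continuous_on UNIV (\<lambda>x. c (x + a))"
proof -
  have "continuous_on UNIV (\<lambda>x::real^'n. x + a)" by (intro continuous_intros)
  then show ?thesis using continuous_on_compose2[OF cont, of UNIV "\<lambda>x. x + a"] by simp
qed

lemma F_cont: "continuous_on UNIV (F al)"
  unfolding F_def
  by (intro continuous_on_sum continuous_on_mult continuous_on_const c_shift_cont)

lemma F_bound: "norm (F al x) \<le> (\<Sum>a\<in>A. norm (al a))"
proof -
  have "norm (F al x) \<le> (\<Sum>a\<in>A. norm (al a * c (x + a)))" unfolding F_def by (rule norm_sum)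
  also have "\<dots> \<le> (\<Sum>a\<in>A. norm (al a))"
  proof (rule sum_mono)
    fix a
    have "norm (al a * c (x + a)) = norm (al a) * norm (c (x + a))" by (rule norm_mult)
    also have "\<dots> \<le> norm (al a) * 1" by (intro mult_left_mono cbound) simp
    finally show "norm (al a * c (x + a)) \<le> norm (al a)" by simp
  qed
  finally show ?thesis .
qed

lemma expo_F: assumes "l \<in> Lam" shows "expo l = F (\<lambda>a. expo l (-a))"
proof
  fix x
  have "\<forall>x. expo l x = (\<Sum>a\<in>A. expo l (-a) * c (x + a))" using assms unfolding Lam_def by (rule CollectD)
  then show "expo l x = F (\<lambda>a. expo l (-a)) x" unfolding F_def by blast
qed

lemma expo_V: "l \<in> Lam \<Longrightarrow> expo l \<in> V"
  using expo_F unfolding V_def by (metis rangeI)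

lemma Lam_iff: assumes "expo l \<in> V" shows "l \<in> Lam"
proof -
  obtain al where e: "expo l = F al" using assms unfolding V_def by auto
  have al: "al b = expo l (-b)" if "b \<in> A" for b using F_at[OF that, of al] e by simp
  show ?thesis unfolding Lam_def
  proof (intro CollectI allI)
    fix x
    have "expo l x = F al x" using e by simp
    also have "\<dots> = (\<Sum>a\<in>A. expo l (-a) * c (x + a))" unfolding F_def
      by (rule sum.cong) (simp_all add: al)
    finally show "expo l x = (\<Sum>a\<in>A. expo l (-a) * c (x + a))" .
  qed
qed

lemma ip_expo: "ip (expo l) (expo l') = cnj (\<Sum>a\<in>A. expo l a * cnj (expo l' a))"
  unfolding ip_def by (simp add: cnj_sum expo_neg)

lemma ip_self: "ip (expo l) (expo l) = of_nat N"
  unfolding ip_expo by (simp add: expo_mult_cnj N_def)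

lemma orth:
  assumes l: "l \<in> Lam" and l': "l' \<in> Lam" and ne: "l \<noteq> l'"
  shows "(\<Sum>a\<in>A. expo l a * cnj (expo l' a)) = 0"
proof -
  define S where "S = ip (expo l) (expo l')"
  have key: "expo l s * cnj (expo l' s) * S = S" for s
  proof -
    have "S = (\<Sum>a\<in>A. expo l (-a) * cnj (expo l' (-a)))"
      unfolding S_def ip_F[of "\<lambda>a. expo l (-a)" "\<lambda>a. expo l' (-a)", folded expo_F[OF l] expo_F[OF l']] ..
    also have "\<dots> = (\<Sum>b\<in>A. expo l (s - b) * cnj (expo l' (s - b)))"
      using G[of "\<lambda>a. expo l (-a)" s "\<lambda>a. expo l' (-a)", folded expo_F[OF l] expo_F[OF l']] by simp
    also have "\<dots> = (\<Sum>b\<in>A. (expo l s * cnj (expo l' s)) * (expo l (-b) * cnj (expo l' (-b))))"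
      by (rule sum.cong[OF refl]) (simp add: expo_diff expo_neg mult_ac)
    also have "\<dots> = expo l s * cnj (expo l' s) * S"
      unfolding S_def ip_def by (simp add: sum_distrib_left)
    finally show ?thesis by simp
  qed
  obtain s where s: "expo (l - l') s = -1" using expo_half[OF ne] by blast
  have "- S = S" using key[of s] s expo_freq_diff[of l s l'] by simp
  then have "S = 0" by simp
  then have "cnj (\<Sum>a\<in>A. expo l a * cnj (expo l' a)) = 0" unfolding S_def ip_expo .
  then show ?thesis by (simp only: complex_cnj_zero_iff)
qed

lemma ip_sum_left: "ip (\<Sum>v\<in>S. sc (u v) v) g = (\<Sum>v\<in>S. u v * ip v g)"
  unfolding ip_def
  apply (simp only: sum_fun_apply sc_apply sum_distrib_right)
  apply (subst sum.swap)
  apply (simp add: sum_distrib_left mult_ac)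
  done

lemma ip_zero: "ip 0 g = 0" unfolding ip_def by simp

lemma Lam_finite: "finite Lam"
proof -
  have indep: "fv.independent (expo ` Lam)"
    unfolding fv.independent_explicit_finite_subsets
  proof (intro allI impI ballI)
    fix S u v0
    assume S: "S \<subseteq> expo ` Lam" and finS: "finite S" and sum0: "(\<Sum>v\<in>S. sc (u v) v) = 0" and v0: "v0 \<in> S"
    have "v0 \<in> expo ` Lam" using S v0 by blast
    then obtain l0 where l0: "l0 \<in> Lam" "v0 = expo l0" by blast
    have ipv: "ip v (expo l0) = (if v = v0 then of_nat N else 0)" if "v \<in> S" for v
    proof -
      have "v \<in> expo ` Lam" using S that by blast
      then obtain l where l: "l \<in> Lam" "v = expo l" by blast
      show ?thesis
      proof (cases "l = l0")
        case True then show ?thesis using l l0 ip_self by simp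
      next
        case False
        then have "v \<noteq> v0" using l l0 expo_inj by metis
        have "ip v (expo l0) = cnj 0" unfolding l(2) ip_expo orth[OF l(1) l0(1) False] ..
        then show ?thesis using \<open>v \<noteq> v0\<close> by simp
      qed
    qed
    have "0 = ip (\<Sum>v\<in>S. sc (u v) v) (expo l0)" using sum0 ip_zero by simp
    also have "\<dots> = (\<Sum>v\<in>S. u v * (if v = v0 then of_nat N else 0))"
      unfolding ip_sum_left by (rule sum.cong) (simp_all add: ipv)
    also have "\<dots> = u v0 * of_nat N" using finS v0 by (simp add: if_distrib sum.delta' cong: if_cong)
    finally show "u v0 = 0" using Npos by simp
  qed
  have sub: "expo ` Lam \<subseteq> fv.span (cf ` A)" using expo_V V_span by blast
  have "finite (expo ` Lam)" using fv.independent_span_bound[OF fin_cfA indep sub] by simp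
  moreover have "inj_on expo Lam" using expo_inj by (meson inj_onI)
  ultimately show ?thesis using finite_imageD by blast
qed

end



lemma ev_exists: fixes M :: "nat \<Rightarrow> nat \<Rightarrow> complex" assumes "d > 0"
  shows "\<exists>mu y. (\<exists>i<d. y i \<noteq> 0) \<and> (\<forall>i<d. (\<Sum>j<d. M i j * y j) = mu * y i)"
proof -
  define B where "B = mat d d (\<lambda>(i,j). M i j)"
  have B: "B \<in> carrier_mat d d" unfolding B_def by simp
  from spectrum_non_empty[OF B assms] obtain mu where "eigenvalue B mu" unfolding spectrum_def by auto
  then obtain v where v: "eigenvector B v mu" unfolding eigenvalue_def by auto
  hence vc: "v \<in> carrier_vec d" and v0: "v \<noteq> 0\<^sub>v d" and ev: "B *\<^sub>v v = mu \<cdot>\<^sub>v v"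
    unfolding eigenvector_def using B by auto
  have "\<exists>i<d. vec_index v i \<noteq> 0" using v0 vc by (metis carrier_vecD eq_vecI index_zero_vec(1) index_zero_vec(2))
  moreover have "\<forall>i<d. (\<Sum>j<d. M i j * vec_index v j) = mu * vec_index v i"
  proof (intro allI impI)
    fix i assume i: "i < d"
    have "vec_index (B *\<^sub>v v) i = mu * vec_index v i" using ev i vc by simp
    moreover have "vec_index (B *\<^sub>v v) i = (\<Sum>j<d. M i j * vec_index v j)"
      using i vc unfolding B_def by (simp add: mult_mat_vec_def scalar_prod_def lessThan_atLeast0)
    ultimately show "(\<Sum>j<d. M i j * vec_index v j) = mu * vec_index v i" by simp
  qed
  ultimately show ?thesis by blast
qed

context cset
begin

lemma fin_sub: "S \<subseteq> V \<Longrightarrow> fv.independent S \<Longrightarrow> finite S"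
  using fv.independent_span_bound[OF fin_cfA] V_span by blast

lemma DIMLT:
  assumes Es: "fv.subspace E" and EU: "E \<subseteq> U" and ne: "E \<noteq> U" and UV: "U \<subseteq> V"
  shows "fv.dim E < fv.dim U"
proof -
  obtain BE where BE: "BE \<subseteq> E" "fv.independent BE" "E \<subseteq> fv.span BE" "card BE = fv.dim E"
    using fv.basis_exists by blast
  obtain BU where BU: "BU \<subseteq> U" "fv.independent BU" "U \<subseteq> fv.span BU" "card BU = fv.dim U"
    using fv.basis_exists by blast
  have finBE: "finite BE" using fin_sub BE EU UV by blast
  have finBU: "finite BU" using fin_sub BU UV by blast
  obtain w where w: "w \<in> U" "w \<notin> E" using EU ne by blast
  have "fv.span BE \<subseteq> E" using fv.span_minimal[OF BE(1) Es] .
  then have wn: "w \<notin> fv.span BE" using w by blast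
  have ind: "fv.independent (insert w BE)" by (rule fv.independent_insertI[OF wn BE(2)])
  have "insert w BE \<subseteq> fv.span BU" using w BE(1) EU BU(3) by blast
  then have "card (insert w BE) \<le> card BU" using fv.independent_span_bound[OF finBU ind] by blast
  moreover have "w \<notin> BE" using w BE(1) by blast
  ultimately have "card BE + 1 \<le> card BU" using finBE by simp
  then show ?thesis using BE(4) BU(4) by simp
qed

lemma MIN_aux:
  "\<forall>U. fv.dim U = k \<longrightarrow> fv.subspace U \<longrightarrow> U \<subseteq> V \<longrightarrow> (\<exists>f\<in>U. f \<noteq> 0) \<longrightarrow>
      (\<forall>f\<in>U. \<forall>t. (\<lambda>x. f (x + t)) \<in> U) \<longrightarrow> (\<exists>l. expo l \<in> U)"
proof (induction k rule: less_induct)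
  case (less k)
  show ?case
  proof (intro allI impI)
    fix U :: "(real^'n \<Rightarrow> complex) set"
    assume dimU: "fv.dim U = k" and sub: "fv.subspace U" and UV: "U \<subseteq> V" and nz: "\<exists>f\<in>U. f \<noteq> 0"
      and inv: "\<forall>f\<in>U. \<forall>t. (\<lambda>x. f (x + t)) \<in> U"
    show "\<exists>l. expo l \<in> U"
    proof (cases "\<forall>t. \<exists>mu. \<forall>f\<in>U. \<forall>x. f (x + t) = mu * f x")
      case True
      then have "\<exists>mu. \<forall>t. \<forall>f\<in>U. \<forall>x. f (x + t) = mu t * f x" by (rule choice)
      then obtain mu where mu: "\<forall>t. \<forall>f\<in>U. \<forall>x. f (x + t) = mu t * f x" by blast
      obtain f where f: "f \<in> U" "f \<noteq> 0" using nz by blast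
      obtain al where fal: "f = F al" using f UV unfolding V_def by auto
      have muf: "f (x + t) = mu t * f x" for t x using mu f(1) by blast
      have f0: "f 0 \<noteq> 0"
      proof
        assume z: "f 0 = 0"
        have "f t = 0" for t using muf[of 0 t] z by simp
        then show False using f(2) by (simp add: fun_eq_iff)
      qed
      define chi where "chi s = (1 / f 0) * f s" for s
      have mut: "mu t = chi t" for t unfolding chi_def using muf[of 0 t] f0 by simp
      have chimult: "chi (s + t) = chi s * chi t" for s t
        using muf[of s t] mut[of t] unfolding chi_def by (simp add: mult_ac)
      have chi0: "chi 0 = 1" unfolding chi_def using f0 by simp
      have chicont: "continuous_on UNIV chi"
        unfolding chi_def fal by (intro continuous_on_mult continuous_on_const F_cont)
      have chibd: "norm (chi s) \<le> (1 / norm (f 0)) * (\<Sum>a\<in>A. norm (al a))" for s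
      proof -
        have "norm (chi s) = (1 / norm (f 0)) * norm (f s)" unfolding chi_def by (simp add: norm_mult norm_divide)
        also have "\<dots> \<le> (1 / norm (f 0)) * (\<Sum>a\<in>A. norm (al a))"
          unfolding fal by (intro mult_left_mono F_bound) simp
        finally show ?thesis .
      qed
      obtain l where l: "\<forall>s. chi s = expo l s"
        using char_expo[OF chicont chimult chi0 chibd] by blast
      have "expo l = sc (1 / f 0) f" using l unfolding chi_def by (simp add: fun_eq_iff)
      then have "expo l \<in> U" using fv.subspace_scale[OF sub f(1)] by simp
      then show ?thesis by blast
    next
      case False
      then obtain t where t: "\<not> (\<exists>mu. \<forall>f\<in>U. \<forall>x. f (x + t) = mu * f x)" by blast
      obtain B where B: "B \<subseteq> U" "fv.independent B" "U \<subseteq> fv.span B" "card B = fv.dim U"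
        using fv.basis_exists by blast
      have finB: "finite B" using fin_sub B UV by blast
      define d where "d = card B"
      have dpos: "d > 0"
      proof (rule ccontr)
        assume "\<not> d > 0"
        then have "B = {}" using finB unfolding d_def by simp
        then have "U \<subseteq> {0}" using B(3) by simp
        then show False using nz by blast
      qed
      obtain e where e: "bij_betw e {..<d} B"
        using ex_bij_betw_nat_finite[OF finB] unfolding d_def atLeast0LessThan by blast
      have eB: "e j \<in> B" if "j < d" for j using e that bij_betwE by blast
      have "\<forall>j. \<exists>u. j < d \<longrightarrow> (\<lambda>x. e j (x + t)) = (\<Sum>v\<in>B. sc (u v) v)"
      proof
        fix j
        show "\<exists>u. j < d \<longrightarrow> (\<lambda>x. e j (x + t)) = (\<Sum>v\<in>B. sc (u v) v)"
        proof (cases "j < d")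
          case True
          then have "(\<lambda>x. e j (x + t)) \<in> U" using inv eB B(1) by blast
          then have "(\<lambda>x. e j (x + t)) \<in> range (\<lambda>u. \<Sum>v\<in>B. sc (u v) v)"
            using B(3) fv.span_finite[OF finB] by blast
          then show ?thesis by auto
        qed simp
      qed
      then have "\<exists>Mc. \<forall>j. j < d \<longrightarrow> (\<lambda>x. e j (x + t)) = (\<Sum>v\<in>B. sc (Mc j v) v)"
        by (rule choice)
      then obtain Mc where Mc0: "\<forall>j. j < d \<longrightarrow> (\<lambda>x. e j (x + t)) = (\<Sum>v\<in>B. sc (Mc j v) v)"
        by blast
      have Mc: "(\<lambda>x. e j (x + t)) = (\<Sum>v\<in>B. sc (Mc j v) v)" if "j < d" for j
        using Mc0 that by blast
      define Mm where "Mm i j = Mc j (e i)" for i j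
      have reidx: "(\<Sum>v\<in>B. g v) = (\<Sum>i<d. g (e i))" for g :: "(real^'n \<Rightarrow> complex) \<Rightarrow> complex"
        using sum.reindex_bij_betw[OF e, of g] by simp
      have reidx2: "(\<Sum>v\<in>B. g v) = (\<Sum>i<d. g (e i))" for g :: "(real^'n \<Rightarrow> complex) \<Rightarrow> (real^'n \<Rightarrow> complex)"
        using sum.reindex_bij_betw[OF e, of g] by simp
      have Mrep: "e j (x + t) = (\<Sum>i<d. Mm i j * e i x)" if j: "j < d" for j x
      proof -
        have "e j (x + t) = (\<Sum>v\<in>B. sc (Mc j v) v) x" using fun_cong[OF Mc[OF j], of x] by simp
        also have "\<dots> = (\<Sum>v\<in>B. Mc j v * v x)" by (simp add: sum_fun_apply)
        also have "\<dots> = (\<Sum>i<d. Mm i j * e i x)" unfolding Mm_def by (rule reidx)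
        finally show ?thesis .
      qed
      obtain mu y where y: "\<exists>i<d. y i \<noteq> 0" "\<forall>i<d. (\<Sum>j<d. Mm i j * y j) = mu * y i"
        using ev_exists[OF dpos, of Mm] by blast
      define v where "v = (\<Sum>j<d. sc (y j) (e j))"
      have v_apply: "v x = (\<Sum>j<d. y j * e j x)" for x unfolding v_def by (simp add: sum_fun_apply)
      have vU: "v \<in> U" unfolding v_def
        by (intro fv.subspace_sum[OF sub] fv.subspace_scale[OF sub]) (use eB B(1) in auto)
      have vshift: "v (x + t) = mu * v x" for x
      proof -
        have "v (x + t) = (\<Sum>j<d. y j * (\<Sum>i<d. Mm i j * e i x))"
          unfolding v_apply by (rule sum.cong) (simp_all add: Mrep)
        also have "\<dots> = (\<Sum>i<d. (\<Sum>j<d. Mm i j * y j) * e i x)"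
          apply (simp only: sum_distrib_left)
          apply (subst sum.swap)
          apply (simp add: sum_distrib_right sum_distrib_left mult_ac)
          done
        also have "\<dots> = (\<Sum>i<d. mu * y i * e i x)"
          by (rule sum.cong) (simp_all add: y(2))
        also have "\<dots> = mu * v x" unfolding v_apply by (simp add: sum_distrib_left mult_ac)
        finally show ?thesis .
      qed
      have vnz: "v \<noteq> 0"
      proof
        assume v0: "v = 0"
        define u where "u b = y (inv_into {..<d} e b)" for b
        have ue: "u (e j) = y j" if "j < d" for j
          unfolding u_def using bij_betw_inv_into_left[OF e] that by simp
        have "(\<Sum>b\<in>B. sc (u b) b) = (\<Sum>j<d. sc (u (e j)) (e j))" by (rule reidx2)
        also have "\<dots> = v" unfolding v_def by (rule sum.cong) (simp_all add: ue)
        finally have s0: "(\<Sum>b\<in>B. sc (u b) b) = 0" using v0 by simp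
        have "\<forall>b\<in>B. u b = 0"
          by (intro ballI, rule B(2)[unfolded fv.independent_explicit_finite_subsets, rule_format, OF subset_refl finB s0])
        obtain i where i: "i < d" "y i \<noteq> 0" using y(1) by blast
        then have "u (e i) = 0" using \<open>\<forall>b\<in>B. u b = 0\<close> eB by blast
        then show False using ue[OF i(1)] i(2) by simp
      qed
      define E where "E = {f \<in> U. \<forall>x. f (x + t) = mu * f x}"
      have Esub: "fv.subspace E"
        unfolding fv.subspace_def E_def
      proof (intro conjI ballI allI CollectI)
        show "0 \<in> U" by (rule fv.subspace_0[OF sub])
        show "(0::real^'n \<Rightarrow> complex) (x + t) = mu * 0 x" for x by simp
      next
        fix f g assume f: "f \<in> {f \<in> U. \<forall>x. f (x + t) = mu * f x}" and g: "g \<in> {f \<in> U. \<forall>x. f (x + t) = mu * f x}"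
        show "f + g \<in> U" using f g fv.subspace_add[OF sub] by blast
        show "(f + g) (x + t) = mu * (f + g) x" for x using f g by (simp add: distrib_left)
      next
        fix r f assume f: "f \<in> {f \<in> U. \<forall>x. f (x + t) = mu * f x}"
        show "sc r f \<in> U" using f fv.subspace_scale[OF sub] by blast
        show "sc r f (x + t) = mu * sc r f x" for x using f by simp
      qed
      have EU: "E \<subseteq> U" unfolding E_def by blast
      have EneU: "E \<noteq> U"
      proof
        assume "E = U"
        then have "\<forall>f\<in>U. \<forall>x. f (x + t) = mu * f x" unfolding E_def by blast
        then show False using t by blast
      qed
      have vE: "v \<in> E" unfolding E_def using vU vshift by blast
      have Einv: "\<forall>f\<in>E. \<forall>s. (\<lambda>x. f (x + s)) \<in> E"
      proof (intro ballI allI)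
        fix f s assume f: "f \<in> E"
        have "(\<lambda>x. f (x + s)) \<in> U" using f inv unfolding E_def by blast
        moreover have "f (x + t + s) = mu * f (x + s)" for x
        proof -
          have h: "f (x + s + t) = mu * f (x + s)" using f unfolding E_def by blast
          have eq: "x + t + s = x + s + t" by (simp add: add_ac)
          show ?thesis unfolding eq by (rule h)
        qed
        ultimately show "(\<lambda>x. f (x + s)) \<in> E" unfolding E_def by simp
      qed
      have dimlt: "fv.dim E < k" using DIMLT[OF Esub EU EneU UV] dimU by simp
      have IH: "\<forall>U. fv.dim U = fv.dim E \<longrightarrow> fv.subspace U \<longrightarrow> U \<subseteq> V \<longrightarrow> (\<exists>f\<in>U. f \<noteq> 0) \<longrightarrow>
          (\<forall>f\<in>U. \<forall>t. (\<lambda>x. f (x + t)) \<in> U) \<longrightarrow> (\<exists>l. expo l \<in> U)"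
        by (rule less.IH[OF dimlt])
      have EV: "E \<subseteq> V" using EU UV by blast
      have Enz: "\<exists>f\<in>E. f \<noteq> 0" using vE vnz by blast
      have "\<exists>l. expo l \<in> E"
        by (rule IH[rule_format, OF refl Esub EV Enz]) (use Einv in blast)
      then show ?thesis using EU by blast
    qed
  qed
qed

lemma MIN:
  assumes "fv.subspace U" "U \<subseteq> V" "\<exists>f\<in>U. f \<noteq> 0" "\<forall>f\<in>U. \<forall>t. (\<lambda>x. f (x + t)) \<in> U"
  shows "\<exists>l. expo l \<in> U"
  using MIN_aux assms by blast

end



context cset
begin

lemma c_in_V: "c \<in> V"
proof -
  have "c = F (\<lambda>a. cnj (c a))"
  proof
    fix x
    have "c x = c (x - 0)" by simp
    also have "\<dots> = (\<Sum>a\<in>A. c (x + a) * cnj (c (0 + a)))" by (rule identI)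
    also have "\<dots> = F (\<lambda>a. cnj (c a)) x" unfolding F_def by (simp add: mult.commute)
    finally show "c x = F (\<lambda>a. cnj (c a)) x" .
  qed
  then show ?thesis unfolding V_def by (metis rangeI)
qed

lemma ip_diff_left: "ip (f - g) h = ip f h - ip g h"
  unfolding ip_def by (simp add: sum_subtractf left_diff_distrib)

lemma ip_add_left: "ip (f + g) h = ip f h + ip g h"
  unfolding ip_def by (simp add: sum.distrib distrib_right)

lemma ip_sc_left: "ip (sc r f) h = r * ip f h"
  unfolding ip_def by (simp add: sum_distrib_left mult_ac)

lemma ip_sc_right: "ip f (\<lambda>x. r * h x) = cnj r * ip f h"
  unfolding ip_def by (simp add: sum_distrib_left mult_ac)

lemma ip_sum_left2: "ip (\<Sum>i\<in>S. sc (u i) (h i)) g = (\<Sum>i\<in>S. u i * ip (h i) g)"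
  unfolding ip_def
  apply (simp only: sum_fun_apply sc_apply sum_distrib_right)
  apply (subst sum.swap)
  apply (simp add: sum_distrib_left mult_ac)
  done

lemma ipexpo: "l' \<in> Lam \<Longrightarrow> l \<in> Lam \<Longrightarrow> ip (expo l') (expo l) = (if l' = l then of_nat N else 0)"
proof -
  assume l': "l' \<in> Lam" and l: "l \<in> Lam"
  show ?thesis
  proof (cases "l' = l")
    case True then show ?thesis using ip_self by simp
  next
    case False
    have "ip (expo l') (expo l) = cnj 0" unfolding ip_expo orth[OF l' l False] ..
    then show ?thesis using False by simp
  qed
qed

lemma c_expansion: "\<exists>w. \<forall>t. c t = (\<Sum>l\<in>Lam. w l * expo l t)"
proof -
  define w where "w l = ip c (expo l) / of_nat N" for l
  define S where "S = (\<Sum>l\<in>Lam. sc (w l) (expo l))"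
  define g where "g = c - S"
  have sumV: "S \<in> V" unfolding S_def
    by (intro fv.subspace_sum[OF V_subspace] fv.subspace_scale[OF V_subspace] expo_V)
  have gV: "g \<in> V" unfolding g_def by (rule fv.subspace_diff[OF V_subspace c_in_V sumV])
  have gperp: "ip g (expo l) = 0" if l: "l \<in> Lam" for l
  proof -
    have "ip g (expo l) = ip c (expo l) - (\<Sum>l'\<in>Lam. w l' * ip (expo l') (expo l))"
      unfolding g_def S_def ip_diff_left ip_sum_left2 ..
    also have "(\<Sum>l'\<in>Lam. w l' * ip (expo l') (expo l)) = (\<Sum>l'\<in>Lam. if l' = l then w l' * of_nat N else 0)"
      by (rule sum.cong[OF refl]) (simp add: ipexpo l)
    also have "\<dots> = w l * of_nat N" using Lam_finite l by (simp add: sum.delta)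
    finally show ?thesis unfolding w_def using Npos by simp
  qed
  have g0: "g = 0"
  proof (rule ccontr)
    assume gnz: "g \<noteq> 0"
    define W where "W = {f \<in> V. \<forall>l\<in>Lam. ip f (expo l) = 0}"
    have Wsub: "fv.subspace W"
      unfolding fv.subspace_def W_def
    proof (intro conjI ballI allI CollectI)
      show "0 \<in> V" by (rule fv.subspace_0[OF V_subspace])
      show "ip 0 (expo l) = 0" for l by (rule ip_zero)
    next
      fix f g assume f: "f \<in> {f \<in> V. \<forall>l\<in>Lam. ip f (expo l) = 0}" and g: "g \<in> {f \<in> V. \<forall>l\<in>Lam. ip f (expo l) = 0}"
      show "f + g \<in> V" using f g fv.subspace_add[OF V_subspace] by blast
      show "ip (f + g) (expo l) = 0" if "l \<in> Lam" for l using f g that by (simp add: ip_add_left)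
    next
      fix r f assume f: "f \<in> {f \<in> V. \<forall>l\<in>Lam. ip f (expo l) = 0}"
      show "sc r f \<in> V" using f fv.subspace_scale[OF V_subspace] by blast
      show "ip (sc r f) (expo l) = 0" if "l \<in> Lam" for l using f that by (simp add: ip_sc_left)
    qed
    have WV: "W \<subseteq> V" unfolding W_def by blast
    have Wnz: "\<exists>f\<in>W. f \<noteq> 0" using gV gperp gnz unfolding W_def by blast
    have Winv: "\<forall>f\<in>W. \<forall>t. (\<lambda>x. f (x + t)) \<in> W"
    proof (intro ballI allI)
      fix f t assume f: "f \<in> W"
      have fV: "f \<in> V" using f unfolding W_def by blast
      have "ip (\<lambda>x. f (x + t)) (expo l) = 0" if l: "l \<in> Lam" for l
      proof -
        have ee: "expo l = (\<lambda>x. cnj (expo l t) * expo l (x + t))"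
        proof
          fix x
          have "cnj (expo l t) * expo l (x + t) = expo l x * (cnj (expo l t) * expo l t)"
            by (simp add: expo_add mult_ac)
          then show "expo l x = cnj (expo l t) * expo l (x + t)" by (simp add: expo_cnj_mult)
        qed
        have "ip (\<lambda>x. f (x + t)) (expo l) = cnj (cnj (expo l t)) * ip (\<lambda>x. f (x + t)) (\<lambda>x. expo l (x + t))"
          by (subst ee) (rule ip_sc_right)
        also have "ip (\<lambda>x. f (x + t)) (\<lambda>x. expo l (x + t)) = ip f (expo l)"
          by (rule ip_shift[OF fV expo_V[OF l]])
        also have "ip f (expo l) = 0" using f l unfolding W_def by blast
        finally show ?thesis by simp
      qed
      then show "(\<lambda>x. f (x + t)) \<in> W" unfolding W_def using shift_V[OF fV] by blast
    qed
    obtain l0 where l0: "expo l0 \<in> W" using MIN[OF Wsub WV Wnz Winv] by blast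
    have "l0 \<in> Lam" using l0 WV Lam_iff by blast
    then have "ip (expo l0) (expo l0) = 0" using l0 unfolding W_def by blast
    then show False using ip_self Npos by simp
  qed
  have cS: "c = S" using g0 unfolding g_def by simp
  have "c t = (\<Sum>l\<in>Lam. w l * expo l t)" for t
    using fun_cong[OF cS, of t] unfolding S_def by (simp add: sum_fun_apply)
  then show ?thesis by blast
qed

lemma dir2: "spectral A"
proof -
  obtain w where w: "\<And>t. c t = (\<Sum>l\<in>Lam. w l * expo l t)" using c_expansion by blast
  show ?thesis unfolding spectral_def orth_basis_exps_def
  proof (rule exI[of _ Lam], intro conjI ballI impI allI)
    fix l l' assume "l \<in> Lam" "l' \<in> Lam" "l \<noteq> l'"
    then show "L2_inner A (expo l) (expo l') = 0" unfolding L2_inner_def using orth by simp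
  next
    fix f :: "real^'n \<Rightarrow> complex"
    define coef where "coef l = (\<Sum>a0\<in>A. f a0 * w l * expo l (-a0))" for l
    have "\<forall>a\<in>A. f a = (\<Sum>l\<in>Lam. coef l * expo l a)"
    proof
      fix a assume a: "a \<in> A"
      have "f a = (\<Sum>a0\<in>A. f a0 * (if a0 = a then 1 else 0))"
        using fin a by (simp add: if_distrib sum.delta' cong: if_cong)
      also have "\<dots> = (\<Sum>a0\<in>A. f a0 * c (a - a0))"
        by (rule sum.cong[OF refl]) (simp add: deltaI a)
      also have "\<dots> = (\<Sum>a0\<in>A. \<Sum>l\<in>Lam. (f a0 * w l * expo l (-a0)) * expo l a)"
      proof (rule sum.cong[OF refl])
        fix a0 assume "a0 \<in> A"
        have ca: "c (a - a0) = (\<Sum>l\<in>Lam. w l * expo l (a + - a0))" using w[of "a - a0"] by simp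
        have "f a0 * c (a - a0) = (\<Sum>l\<in>Lam. f a0 * (w l * expo l (a + - a0)))"
          unfolding ca by (rule sum_distrib_left)
        also have "\<dots> = (\<Sum>l\<in>Lam. (f a0 * w l * expo l (-a0)) * expo l a)"
          by (rule sum.cong[OF refl]) (simp only: expo_add mult_ac)
        finally show "f a0 * c (a - a0) = (\<Sum>l\<in>Lam. (f a0 * w l * expo l (-a0)) * expo l a)" .
      qed
      also have "\<dots> = (\<Sum>l\<in>Lam. \<Sum>a0\<in>A. (f a0 * w l * expo l (-a0)) * expo l a)"
        by (rule sum.swap)
      also have "\<dots> = (\<Sum>l\<in>Lam. coef l * expo l a)"
        unfolding coef_def by (simp add: sum_distrib_right)
      finally show "f a = (\<Sum>l\<in>Lam. coef l * expo l a)" .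
    qed
    then show "\<exists>L0 coef. finite L0 \<and> L0 \<subseteq> Lam \<and> (\<forall>a\<in>A. f a = (\<Sum>l\<in>L0. coef l * expo l a))"
      using Lam_finite by blast
  qed
qed

end

theorem theorem2p7:
  fixes A :: "(real^'n) set"
  assumes "finite A"
  shows "spectral A \<longleftrightarrow>
    (\<exists>c :: real^'n \<Rightarrow> complex. continuous_on UNIV c \<and>
       (\<forall>a\<in>A. \<forall>a'\<in>A. c (a' - a) = (if a = a' then 1 else 0)) \<and>
       (\<forall>t. c (- t) = cnj (c t)) \<and>
       (\<forall>u1 u2. c (u1 - u2) = (\<Sum>a\<in>A. c (u1 + a) * cnj (c (u2 + a)))))"
proof
  assume "spectral A"
  then obtain Lam where ob: "orth_basis_exps A Lam" unfolding spectral_def by blast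
  show "\<exists>c :: real^'n \<Rightarrow> complex. continuous_on UNIV c \<and>
       (\<forall>a\<in>A. \<forall>a'\<in>A. c (a' - a) = (if a = a' then 1 else 0)) \<and>
       (\<forall>t. c (- t) = cnj (c t)) \<and>
       (\<forall>u1 u2. c (u1 - u2) = (\<Sum>a\<in>A. c (u1 + a) * cnj (c (u2 + a))))"
  proof (cases "A = {}")
    case True
    show ?thesis by (rule exI[of _ "\<lambda>_. 0"]) (simp add: True)
  next
    case False
    show ?thesis by (rule dir1[OF assms False ob])
  qed
next
  assume "\<exists>c :: real^'n \<Rightarrow> complex. continuous_on UNIV c \<and>
       (\<forall>a\<in>A. \<forall>a'\<in>A. c (a' - a) = (if a = a' then 1 else 0)) \<and>
       (\<forall>t. c (- t) = cnj (c t)) \<and>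
       (\<forall>u1 u2. c (u1 - u2) = (\<Sum>a\<in>A. c (u1 + a) * cnj (c (u2 + a))))"
  then obtain c :: "real^'n \<Rightarrow> complex" where c1: "continuous_on UNIV c"
    and c2: "\<forall>a\<in>A. \<forall>a'\<in>A. c (a' - a) = (if a = a' then 1 else 0)"
    and c3: "\<forall>t. c (- t) = cnj (c t)"
    and c4: "\<forall>u1 u2. c (u1 - u2) = (\<Sum>a\<in>A. c (u1 + a) * cnj (c (u2 + a)))" by blast
  show "spectral A"
  proof (cases "A = {}")
    case True
    show ?thesis unfolding spectral_def orth_basis_exps_def True
      by (intro exI[of _ "{}"]) auto
  next
    case False
    interpret cset A c
      by (rule cset.intro[OF assms False c1 c2 c3 c4])
    show ?thesis by (rule dir2)
  qed
qed


end
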